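(* Let $G$ be a finite group with $\pi_e(G)\subseteq\{1,2,3,4,6\}$ that has precisely three cyclic subgroups of order $6$. If there exist two cyclic subgroups of order $6$ of $G$ whose intersection has order $3$, then the intersection of any two distinct cyclic subgroups of order $6$ of $G$ has order $3$.
   Context: For a finite group $G$, $\pi_e(G)$ denotes the set of orders of elements of $G$. *)

theory Defs
  imports "HOL-Algebra.Algebra"
begin

definition elem_orders :: "('a, 'b) monoid_scheme \<Rightarrow> nat set" where
  "elem_orders G = (\<lambda>x. group.ord G x) ` carrier G"

definition cyclic_subgroups_of_order :: "('a, 'b) monoid_scheme \<Rightarrow> nat \<Rightarrow> 'a set set" where
  "cyclic_subgroups_of_order G n =
     {H. (\<exists>x\<in>carrier G. H = generate G {x}) \<and> card H = n}"

end

theory Submission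
  imports Defs
begin

lemma dvd6: "(n::nat) dvd 6 \<Longrightarrow> n \<in> {1,2,3,6}"
proof -
  assume h: "n dvd 6"
  hence "n \<le> 6" by (simp add: dvd_imp_le)
  hence "n \<in> {0,1,2,3,4,5,6}" by auto
  thus ?thesis using h by auto
qed

lemma dvd3: "(n::nat) dvd 3 \<Longrightarrow> n \<in> {1,3}"
proof -
  assume h: "n dvd 3"
  hence "n \<le> 3" by (simp add: dvd_imp_le)
  hence "n \<in> {0,1,2,3}" by auto
  thus ?thesis using h by auto
qed

context group begin

lemma card_sub_dvd:
  assumes "subgroup I G" "subgroup J G" "I \<subseteq> J"
  shows "card I dvd card J"
proof -
  have "card (rcosets\<^bsub>G\<lparr>carrier := J\<rparr>\<^esub> I) * card I = order (G\<lparr>carrier := J\<rparr>)"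
    using group.lagrange[OF subgroup_imp_group[OF assms(2)] subgroup_incl[OF assms]] .
  thus ?thesis unfolding order_def by (metis dvd_triv_right partial_object.select_convs(1) partial_object.surjective partial_object.update_convs(1))
qed

lemma pow_in_gen: assumes x: "x \<in> carrier G" shows "x [^] (n::nat) \<in> generate G {x}"
proof -
  have "x [^] (int n) \<in> generate G {x}" unfolding generate_pow[OF x] by blast
  thus ?thesis by (simp add: int_pow_int)
qed

lemma gen_comm:
  assumes "x \<in> carrier G" "a \<in> generate G {x}" "b \<in> generate G {x}"
  shows "a \<otimes> b = b \<otimes> a"
proof -
  obtain i j :: int where "a = x [^] i" "b = x [^] j" using assms generate_pow[of x] by auto
  thus ?thesis using int_pow_mult[OF assms(1), of i j] int_pow_mult[OF assms(1), of j i]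
    by (simp add: add.commute)
qed

lemma inv_unique6:
  assumes x: "x \<in> carrier G" and o: "ord x = 6" and t: "t \<in> generate G {x}"
    and tt: "t \<otimes> t = \<one>" and t1: "t \<noteq> \<one>"
  shows "t = x [^] (3::int)"
proof -
  obtain k :: int where k: "t = x [^] k" using t generate_pow[OF x] by auto
  have "x [^] (k + k) = \<one>" using tt k int_pow_mult[OF x, of k k] by (simp only:)
  hence a: "6 dvd (k + k)" using int_pow_eq_id[OF x] o by simp
  have b: "\<not> 6 dvd k" using t1 k int_pow_eq_id[OF x] o by simp
  have "(6::int) dvd (k - 3)" using a b by presburger
  hence "x [^] (k - 3) = \<one>" using int_pow_eq_id[OF x] o by simp
  moreover have "x [^] k = x [^] (k - 3) \<otimes> x [^] (3::int)"
    using int_pow_mult[OF x, of "k-3" 3] by simp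
  ultimately show ?thesis using k x by simp
qed

lemma prod6:
  assumes a: "a \<in> carrier G" and u: "u \<in> carrier G" and oa: "ord a = 3"
    and uu: "u \<otimes> u = \<one>" and u1: "u \<noteq> \<one>" and c: "a \<otimes> u = u \<otimes> a"
  shows "ord (a \<otimes> u) = 6 \<and> a \<in> generate G {a \<otimes> u} \<and> u \<in> generate G {a \<otimes> u}
         \<and> card (generate G {a \<otimes> u}) = 6"
proof -
  have g: "a \<otimes> u \<in> carrier G" using a u by simp
  have pw: "(a \<otimes> u) [^] (n::nat) = a [^] n \<otimes> u [^] n" for n
    using pow_mult_distrib[OF c a u] .
  have ou2: "u [^] (2::nat) = \<one>" using uu u by (simp add: numeral_2_eq_2)
  have ou: "ord u = 2"
  proof -
    have "ord u dvd 2" using ou2 pow_eq_id[OF u] by simp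
    moreover have "ord u \<noteq> 1" using ord_eq_1[OF u] u1 by simp
    ultimately show ?thesis using dvd_imp_le[of "ord u" 2] by (cases "ord u"; auto simp: le_Suc_eq)
  qed
  have pa: "a [^] (n::nat) = \<one> \<longleftrightarrow> 3 dvd n" for n using pow_eq_id[OF a] oa by simp
  have pu: "u [^] (n::nat) = \<one> \<longleftrightarrow> 2 dvd n" for n using pow_eq_id[OF u] ou by simp
  have p6: "(a \<otimes> u) [^] (6::nat) = \<one>" using pw[of 6] pa[of 6] pu[of 6] by simp
  have p2: "(a \<otimes> u) [^] (2::nat) \<noteq> \<one>" using pw[of 2] pa[of 2] pu[of 2] a by simp
  have a4: "a [^] (4::nat) = a"
    using nat_pow_mult[OF a, of 3 1] pa[of 3] a by simp
  have u3: "u [^] (3::nat) = u"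
    using nat_pow_mult[OF u, of 2 1] pu[of 2] u by simp
  have p4: "(a \<otimes> u) [^] (4::nat) = a" using pw[of 4] a4 pu[of 4] a by simp
  have p3: "(a \<otimes> u) [^] (3::nat) = u" using pw[of 3] u3 pa[of 3] u by simp
  have "ord (a \<otimes> u) dvd 6" using p6 pow_eq_id[OF g] by simp
  moreover have "\<not> ord (a \<otimes> u) dvd 2" using p2 pow_eq_id[OF g] by simp
  moreover have "\<not> ord (a \<otimes> u) dvd 3" using p3 u1 pow_eq_id[OF g, of 3] by simp
  ultimately have o6: "ord (a \<otimes> u) = 6" using dvd6 by fastforce
  show ?thesis using o6 pow_in_gen[OF g, of 4] pow_in_gen[OF g, of 3] p4 p3
      generate_pow_card[OF g] by simp
qed

end

lemma (in group) invol_facts: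
  assumes s: "s \<in> carrier G" and t: "t \<in> carrier G" and a: "a \<in> carrier G"
    and ss: "s \<otimes> s = \<one>" and tt: "t \<otimes> t = \<one>" and s1: "s \<noteq> \<one>" and t1: "t \<noteq> \<one>"
    and st: "s \<noteq> t" and as: "a \<otimes> s = s \<otimes> a" and at: "a \<otimes> t = t \<otimes> a"
  defines "u \<equiv> (if s \<otimes> t = t \<otimes> s then s \<otimes> t else s \<otimes> t \<otimes> s)"
  shows "u \<in> carrier G \<and> u \<otimes> u = \<one> \<and> u \<noteq> \<one> \<and> a \<otimes> u = u \<otimes> a \<and> u \<noteq> s \<and> u \<noteq> t"
proof (cases "s \<otimes> t = t \<otimes> s")
  case True
  hence u: "u = s \<otimes> t" by (simp add: u_def)
  have 1: "u \<otimes> u = \<one>"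
  proof -
    have "s \<otimes> t \<otimes> (s \<otimes> t) = s \<otimes> (t \<otimes> s) \<otimes> t" using s t by (simp add: m_assoc)
    also have "\<dots> = s \<otimes> (s \<otimes> t) \<otimes> t" using True by simp
    also have "\<dots> = (s \<otimes> s) \<otimes> (t \<otimes> t)" using s t by (simp add: m_assoc)
    finally show ?thesis using u ss tt by simp
  qed
  have 2: "u \<noteq> \<one>"
  proof
    assume "u = \<one>"
    hence "s \<otimes> (s \<otimes> t) = s" using u s by simp
    hence "t = s" using ss s t by (simp add: m_assoc[symmetric])
    thus False using st by simp
  qed
  have 3: "a \<otimes> u = u \<otimes> a"
  proof -
    have "a \<otimes> (s \<otimes> t) = (s \<otimes> a) \<otimes> t" using as a s t by (simp add: m_assoc[symmetric])
    also have "\<dots> = s \<otimes> (t \<otimes> a)" using at a s t by (simp add: m_assoc)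
    finally show ?thesis using u a s t by (simp add: m_assoc)
  qed
  have 4: "u \<noteq> s"
  proof
    assume "u = s" hence "s \<otimes> t = s \<otimes> \<one>" using u s by simp
    hence "t = \<one>" using s t l_cancel by blast
    thus False using t1 by simp
  qed
  have 5: "u \<noteq> t"
  proof
    assume "u = t" hence "s \<otimes> t = \<one> \<otimes> t" using u t by simp
    hence "s = \<one>" using s t r_cancel by blast
    thus False using s1 by simp
  qed
  show ?thesis using 1 2 3 4 5 u s t by simp
next
  case False
  hence u: "u = s \<otimes> t \<otimes> s" by (simp add: u_def)
  have sx: "s \<otimes> (s \<otimes> x) = x" if "x \<in> carrier G" for x using that s ss by (simp add: m_assoc[symmetric])
  have e: "s \<otimes> u \<otimes> s = t" using u s t ss sx by (simp add: m_assoc)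
  have 1: "u \<otimes> u = \<one>"
  proof -
    have "s \<otimes> t \<otimes> s \<otimes> (s \<otimes> t \<otimes> s) = s \<otimes> t \<otimes> (s \<otimes> s) \<otimes> t \<otimes> s" using s t by (simp add: m_assoc)
    also have "\<dots> = s \<otimes> (t \<otimes> t) \<otimes> s" using ss s t by (simp add: m_assoc)
    finally show ?thesis using u ss tt s t by simp
  qed
  have 2: "u \<noteq> \<one>" using e t1 ss s by auto
  have 3: "a \<otimes> u = u \<otimes> a"
  proof -
    have "a \<otimes> (s \<otimes> t \<otimes> s) = (s \<otimes> a) \<otimes> t \<otimes> s" using as a s t by (simp add: m_assoc[symmetric])
    also have "\<dots> = s \<otimes> (t \<otimes> a) \<otimes> s" using at a s t by (simp add: m_assoc)
    also have "\<dots> = s \<otimes> t \<otimes> (s \<otimes> a)" using as a s t by (simp add: m_assoc)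
    finally show ?thesis using u a s t by (simp add: m_assoc)
  qed
  have 4: "u \<noteq> s"
  proof
    assume "u = s" hence "t = s \<otimes> s \<otimes> s" using e by simp
    thus False using ss s st by simp
  qed
  have 5: "u \<noteq> t"
  proof
    assume h: "u = t"
    have "s \<otimes> t = s \<otimes> t \<otimes> s \<otimes> s" using ss s t by (simp add: m_assoc)
    also have "\<dots> = t \<otimes> s" using h u by simp
    finally show False using False by simp
  qed
  show ?thesis using 1 2 3 4 5 u s t by simp
qed


lemma (in group) main_aux:
  assumes "finite (carrier G)"
    and "card (cyclic_subgroups_of_order G 6) = 3"
    and "\<exists>H\<in>cyclic_subgroups_of_order G 6. \<exists>K\<in>cyclic_subgroups_of_order G 6.
           card (H \<inter> K) = 3"
  shows "\<forall>H\<in>cyclic_subgroups_of_order G 6. \<forall>K\<in>cyclic_subgroups_of_order G 6.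
           H \<noteq> K \<longrightarrow> card (H \<inter> K) = 3"
proof -
  define S where "S = cyclic_subgroups_of_order G 6"
  have memS: "M \<in> S \<longleftrightarrow> (\<exists>x\<in>carrier G. M = generate G {x}) \<and> card M = 6" for M
    unfolding S_def cyclic_subgroups_of_order_def by simp
  have subS: "subgroup M G" if "M \<in> S" for M
    using that memS generate_is_subgroup by auto
  have finS: "finite M" if "M \<in> S" for M
    using subS[OF that] subgroup.subset assms(1) finite_subset by metis
  obtain H K where HS: "H \<in> S" and KS: "K \<in> S" and HK3: "card (H \<inter> K) = 3"
    using assms(3) S_def by auto
  obtain x where x: "x \<in> carrier G" "H = generate G {x}" and cH: "card H = 6" using HS memS by auto
  obtain y where y: "y \<in> carrier G" "K = generate G {y}" and cK: "card K = 6" using KS memS by auto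
  have ox: "ord x = 6" using generate_pow_card[OF x(1)] x cH by simp
  have oy: "ord y = 6" using generate_pow_card[OF y(1)] y cK by simp
  have HneK: "H \<noteq> K" using HK3 cH by auto
  have sHK: "subgroup (H \<inter> K) G" using subgroups_Inter_pair subS HS KS by blast
  have "H \<inter> K \<noteq> {\<one>}" using HK3 by auto
  moreover have "\<one> \<in> H \<inter> K" using sHK subgroup.one_closed by blast
  ultimately obtain a where aHK: "a \<in> H \<inter> K" and a1: "a \<noteq> \<one>" by blast
  have a: "a \<in> carrier G" using aHK sHK subgroup.subset by blast
  have gaHK: "generate G {a} \<subseteq> H \<inter> K" using generate_subgroup_incl[OF _ sHK] aHK by blast
  have "ord a dvd 3"
    using card_sub_dvd[OF generate_is_subgroup sHK gaHK] a sHK generate_pow_card[OF a] HK3 by simp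
  moreover have "ord a \<noteq> 1" using ord_eq_1[OF a] a1 by simp
  ultimately have oa: "ord a = 3" using dvd3 by fastforce
  define s where "s = x [^] (3::int)"
  define t where "t = y [^] (3::int)"
  have sH: "s \<in> H" unfolding s_def x(2) generate_pow[OF x(1)] by blast
  have tK: "t \<in> K" unfolding t_def y(2) generate_pow[OF y(1)] by blast
  have s: "s \<in> carrier G" using s_def x by simp
  have t: "t \<in> carrier G" using t_def y by simp
  have ss: "s \<otimes> s = \<one>"
    using int_pow_mult[OF x(1), of 3 3] int_pow_eq_id[OF x(1), of 6] ox s_def by simp
  have tt: "t \<otimes> t = \<one>"
    using int_pow_mult[OF y(1), of 3 3] int_pow_eq_id[OF y(1), of 6] oy t_def by simp
  have s1: "s \<noteq> \<one>" using int_pow_eq_id[OF x(1), of 3] ox s_def by simp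
  have t1: "t \<noteq> \<one>" using int_pow_eq_id[OF y(1), of 3] oy t_def by simp
  have aHx: "a \<in> generate G {x}" using aHK x(2) by simp
  have sHx: "s \<in> generate G {x}" using sH x(2) by simp
  have aKy: "a \<in> generate G {y}" using aHK y(2) by simp
  have tKy: "t \<in> generate G {y}" using tK y(2) by simp
  have as: "a \<otimes> s = s \<otimes> a" using gen_comm[OF x(1) aHx sHx] .
  have at: "a \<otimes> t = t \<otimes> a" using gen_comm[OF y(1) aKy tKy] .
  have eqgen: "generate G {a \<otimes> v} = M"
    if "M \<in> S" "v \<in> M" "a \<in> M" "v \<in> carrier G" "v \<otimes> v = \<one>" "v \<noteq> \<one>" "a \<otimes> v = v \<otimes> a" for M v
  proof -
    have P: "card (generate G {a \<otimes> v}) = 6" using prod6[OF a that(4) oa that(5-7)] by simp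
    have "a \<otimes> v \<in> M" using subgroup.m_closed[OF subS[OF that(1)] that(3) that(2)] .
    hence "generate G {a \<otimes> v} \<subseteq> M" using generate_subgroup_incl[OF _ subS[OF that(1)]] by simp
    moreover have cM: "card M = 6" using memS that(1) by simp
    ultimately show ?thesis using card_subset_eq[OF finS[OF that(1)]] P by simp
  qed
  have aH: "a \<in> H" and aK: "a \<in> K" using aHK by auto
  have st: "s \<noteq> t"
  proof
    assume e: "s = t"
    have sK: "s \<in> K" using e tK by simp
    have "generate G {a \<otimes> s} = K" using eqgen[OF KS sK aK s ss s1 as] .
    moreover have "generate G {a \<otimes> s} = H" using eqgen[OF HS sH aH s ss s1 as] .
    ultimately show False using HneK by simp
  qed
  define u where "u = (if s \<otimes> t = t \<otimes> s then s \<otimes> t else s \<otimes> t \<otimes> s)"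
  have U: "u \<in> carrier G \<and> u \<otimes> u = \<one> \<and> u \<noteq> \<one> \<and> a \<otimes> u = u \<otimes> a \<and> u \<noteq> s \<and> u \<noteq> t"
    using invol_facts[OF s t a ss tt s1 t1 st as at] unfolding u_def .
  define L where "L = generate G {a \<otimes> u}"
  have P: "ord (a \<otimes> u) = 6 \<and> a \<in> L \<and> u \<in> L \<and> card L = 6"
    unfolding L_def using prod6[OF a _ oa, of u] U by meson
  have auc: "a \<otimes> u \<in> carrier G" using a U by simp
  have LS: "L \<in> S" unfolding memS[of L] using P L_def auc by blast
  have LH: "L \<noteq> H"
  proof
    assume "L = H"
    hence "u \<in> generate G {x}" using P x by simp
    hence "u = s" unfolding s_def using inv_unique6[OF x(1) ox] U by blast
    thus False using U by simp
  qed
  have LK: "L \<noteq> K"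
  proof
    assume "L = K"
    hence "u \<in> generate G {y}" using P y by simp
    hence "u = t" unfolding t_def using inv_unique6[OF y(1) oy] U by blast
    thus False using U by simp
  qed
  have "{H, K, L} = S"
  proof (rule card_subset_eq)
    show "finite S" using assms(2) S_def card.infinite by force
    show "{H, K, L} \<subseteq> S" using HS KS LS by simp
    show "card {H, K, L} = card S" using HneK LH LK assms(2) S_def by auto
  qed
  hence aall: "a \<in> M" if "M \<in> S" for M using that aHK P by auto
  show ?thesis unfolding S_def[symmetric]
  proof (intro ballI impI)
    fix M N assume M: "M \<in> S" and N: "N \<in> S" and MN: "M \<noteq> N"
    have sMN: "subgroup (M \<inter> N) G" using subgroups_Inter_pair subS M N by blast
    have "card (M \<inter> N) dvd card M" using card_sub_dvd[OF sMN subS[OF M]] by simp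
    hence d: "card (M \<inter> N) dvd 6" using memS M by simp
    have "generate G {a} \<subseteq> M \<inter> N" using generate_subgroup_incl[OF _ sMN] aall M N by blast
    moreover have "card (generate G {a}) = 3" using generate_pow_card[OF a] oa by simp
    moreover have "finite (M \<inter> N)" using finS M by blast
    ultimately have ge: "3 \<le> card (M \<inter> N)" by (metis card_mono)
    have ne: "card (M \<inter> N) \<noteq> 6"
    proof
      assume h: "card (M \<inter> N) = 6"
      have "M \<inter> N = M" using card_subset_eq[OF finS[OF M], of "M \<inter> N"] h memS M by simp
      moreover have "M \<inter> N = N" using card_subset_eq[OF finS[OF N], of "M \<inter> N"] h memS N by simp
      ultimately show False using MN by simp
    qed
    show "card (M \<inter> N) = 3" using dvd6[OF d] ge ne by auto
  qed
qed

theorem lemma3p2: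
  fixes G :: "('a, 'b) monoid_scheme"
  assumes "group G"
    and "finite (carrier G)"
    and "elem_orders G \<subseteq> {1, 2, 3, 4, 6}"
    and "card (cyclic_subgroups_of_order G 6) = 3"
    and "\<exists>H\<in>cyclic_subgroups_of_order G 6. \<exists>K\<in>cyclic_subgroups_of_order G 6.
           card (H \<inter> K) = 3"
  shows "\<forall>H\<in>cyclic_subgroups_of_order G 6. \<forall>K\<in>cyclic_subgroups_of_order G 6.
           H \<noteq> K \<longrightarrow> card (H \<inter> K) = 3"
  using group.main_aux[OF assms(1) assms(2) assms(4) assms(5)] .

end
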